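(* Let $x\in\{\text{stage},\text{stage2},\text{CF2}\}$ and let $\sigma_x^{\cap}$ be the skeptical mode of $\sigma_x$. Then there exist argumentation frameworks $AF=(AR,Attacks)$ and $AF'=(AR',Attacks')$ with $AF\preceq_N AF'$ such that the following statement does NOT hold: $$\forall E\in\sigma_x^{\cap}(AF)\ \exists E'\in\sigma_x^{\cap}(AF') \text{ such that } (E'\not\subseteq AR\ \lor\ E'=E).$$
   Context: An argumentation framework is a pair $AF=(AR,Attacks)$ with $AR$ a finite set and $Attacks\subseteq AR\times AR$; $a$ attacks $b$ iff $(a,b)\in Attacks$; a set $S$ attacks $b$ iff some element of $S$ attacks $b$. An argumentation semantics $\sigma$ assigns to each $AF$ a set $\sigma(AF)$ of subsets of $AR$. $AF\preceq_N AF'$ (normal expansion) iff $AR\subseteq AR'$, $Attacks\subseteq Attacks'$ and no $(a,b)\in Attacks'\setminus Attacks$ has $a,b\in AR$. Skeptical mode: $\sigma^{\cap}(AF)=\{\bigcap_{E\in\sigma(AF)}E\}$. $S\subseteq AR$ is conflict-free iff no element of $S$ attacks an element of $S$. $S^+=\{b: \text{some } a\in S \text{ attacks } b\}$. A naive extension is a $\subseteq$-maximal conflict-free set. A stage extension is a conflict-free $S$ such that no conflict-free $S'$ has $S'\cup S'^+\supsetneq S\cup S^+$. Attack sequence: $\langle a_1,\dots,a_n\rangle$ of pairwise distinct arguments with $(a_i,a_{i+1})\in Attacks$; $b$ is reachable from $a$ iff such a sequence has $a_1=a$, $a_n=b$. The strongly connected components (SCCs) of $AF$ are the maximal sets of mutually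 reachable arguments; $SCCS_{AF}$ is the set of them. For $S\subseteq AR$, the restriction $AF\downarrow_S=(S, Attacks\cap(S\times S))$. For an SCC $S$ and $E\subseteq AR$: $S^-_{out}=\{a\notin S: a \text{ attacks some element of } S\}$; $D_{AF}(S,E)=\{a\in S: E\cap S^-_{out} \text{ attacks } a\}$; $P_{AF}(S,E)=\{a\in S: E\cap S^-_{out}\text{ does not attack } a \text{ and } \exists b\in S^-_{out} \text{ attacking } a \text{ such that } E \text{ does not attack } b\}$; $U_{AF}(S,E)=S\setminus(D_{AF}(S,E)\cup P_{AF}(S,E))$; $UP_{AF}(S,E)=U_{AF}(S,E)\cup P_{AF}(S,E)$. CF2: $E\subseteq AR$ is a CF2 extension of $AF$ iff either $|SCCS_{AF}|=1$ and $E$ is a naive extension of $AF$, or $|SCCS_{AF}|>1$ and for every $S\in SCCS_{AF}$, $E\cap S$ is a CF2 extension of $AF\downarrow_{UP_{AF}(S,E)}$. Stage2 is defined identically with "naive extension" replaced by "stage extension". $\sigma_x(AF)$ denotes the set of all $x$-extensions. *)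

theory Defs
  imports Main
begin

definition AF :: "'a set \<Rightarrow> ('a \<times> 'a) set \<Rightarrow> bool" where
  "AF AR Att \<longleftrightarrow> finite AR \<and> Att \<subseteq> AR \<times> AR"

definition attacks_set :: "('a \<times> 'a) set \<Rightarrow> 'a set \<Rightarrow> 'a \<Rightarrow> bool" where
  "attacks_set Att S b \<longleftrightarrow> (\<exists>a\<in>S. (a, b) \<in> Att)"

definition conflict_free :: "'a set \<Rightarrow> ('a \<times> 'a) set \<Rightarrow> 'a set \<Rightarrow> bool" where
  "conflict_free AR Att S \<longleftrightarrow> S \<subseteq> AR \<and> (\<forall>a\<in>S. \<forall>b\<in>S. (a, b) \<notin> Att)"

definition plus :: "('a \<times> 'a) set \<Rightarrow> 'a set \<Rightarrow> 'a set" where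
  "plus Att S = {b. attacks_set Att S b}"

definition naive :: "'a set \<Rightarrow> ('a \<times> 'a) set \<Rightarrow> 'a set set" where
  "naive AR Att = {S. conflict_free AR Att S \<and>
      (\<forall>S'. conflict_free AR Att S' \<and> S \<subseteq> S' \<longrightarrow> S' = S)}"

definition stage :: "'a set \<Rightarrow> ('a \<times> 'a) set \<Rightarrow> 'a set set" where
  "stage AR Att = {S. conflict_free AR Att S \<and>
      \<not> (\<exists>S'. conflict_free AR Att S' \<and> S' \<union> plus Att S' \<supset> S \<union> plus Att S)}"

definition reachable :: "'a set \<Rightarrow> ('a \<times> 'a) set \<Rightarrow> 'a \<Rightarrow> 'a \<Rightarrow> bool" where
  "reachable AR Att a b \<longleftrightarrow> (\<exists>xs. xs \<noteq> [] \<and> distinct xs \<and> set xs \<subseteq> AR \<and>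
      hd xs = a \<and> last xs = b \<and> (\<forall>i. Suc i < length xs \<longrightarrow> (xs ! i, xs ! Suc i) \<in> Att))"

definition SCCS :: "'a set \<Rightarrow> ('a \<times> 'a) set \<Rightarrow> 'a set set" where
  "SCCS AR Att = {S. \<exists>a\<in>AR. S = {b\<in>AR. reachable AR Att a b \<and> reachable AR Att b a}}"

definition restr :: "('a \<times> 'a) set \<Rightarrow> 'a set \<Rightarrow> ('a \<times> 'a) set" where
  "restr Att S = Att \<inter> (S \<times> S)"

definition out_minus :: "'a set \<Rightarrow> ('a \<times> 'a) set \<Rightarrow> 'a set \<Rightarrow> 'a set" where
  "out_minus AR Att S = {a\<in>AR. a \<notin> S \<and> (\<exists>b\<in>S. (a, b) \<in> Att)}"

definition Dset :: "'a set \<Rightarrow> ('a \<times> 'a) set \<Rightarrow> 'a set \<Rightarrow> 'a set \<Rightarrow> 'a set" where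
  "Dset AR Att S E = {a\<in>S. attacks_set Att (E \<inter> out_minus AR Att S) a}"

definition Pset :: "'a set \<Rightarrow> ('a \<times> 'a) set \<Rightarrow> 'a set \<Rightarrow> 'a set \<Rightarrow> 'a set" where
  "Pset AR Att S E = {a\<in>S. \<not> attacks_set Att (E \<inter> out_minus AR Att S) a \<and>
      (\<exists>b\<in>out_minus AR Att S. (b, a) \<in> Att \<and> \<not> attacks_set Att E b)}"

definition Uset :: "'a set \<Rightarrow> ('a \<times> 'a) set \<Rightarrow> 'a set \<Rightarrow> 'a set \<Rightarrow> 'a set" where
  "Uset AR Att S E = S - (Dset AR Att S E \<union> Pset AR Att S E)"

definition UPset :: "'a set \<Rightarrow> ('a \<times> 'a) set \<Rightarrow> 'a set \<Rightarrow> 'a set \<Rightarrow> 'a set" where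
  "UPset AR Att S E = Uset AR Att S E \<union> Pset AR Att S E"

text \<open>SCC-recursive scheme over a base semantics (naive gives CF2, stage gives stage2).
  The recursion is well-founded since UP(S,E) is a subset of S, a proper subset of AR.\<close>
inductive scc_rec :: "('a set \<Rightarrow> ('a \<times> 'a) set \<Rightarrow> 'a set set) \<Rightarrow> 'a set \<Rightarrow> ('a \<times> 'a) set \<Rightarrow> 'a set \<Rightarrow> bool"
  for base where
  base: "card (SCCS AR Att) = 1 \<Longrightarrow> E \<in> base AR Att \<Longrightarrow> scc_rec base AR Att E"
| recur: "card (SCCS AR Att) \<noteq> 1 \<Longrightarrow> E \<subseteq> AR \<Longrightarrow>
     (\<forall>S\<in>SCCS AR Att. scc_rec base (UPset AR Att S E) (restr Att (UPset AR Att S E)) (E \<inter> S))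
     \<Longrightarrow> scc_rec base AR Att E"

definition cf2 :: "'a set \<Rightarrow> ('a \<times> 'a) set \<Rightarrow> 'a set set" where
  "cf2 AR Att = {E. scc_rec naive AR Att E}"

definition stage2 :: "'a set \<Rightarrow> ('a \<times> 'a) set \<Rightarrow> 'a set set" where
  "stage2 AR Att = {E. scc_rec stage AR Att E}"

definition skeptical :: "('a set \<Rightarrow> ('a \<times> 'a) set \<Rightarrow> 'a set set) \<Rightarrow> 'a set \<Rightarrow> ('a \<times> 'a) set \<Rightarrow> 'a set set" where
  "skeptical \<sigma> AR Att = {\<Inter> (\<sigma> AR Att)}"

definition normal_expansion :: "'a set \<Rightarrow> ('a \<times> 'a) set \<Rightarrow> 'a set \<Rightarrow> ('a \<times> 'a) set \<Rightarrow> bool" where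
  "normal_expansion AR Att AR' Att' \<longleftrightarrow> AR \<subseteq> AR' \<and> Att \<subseteq> Att' \<and>
     (\<forall>(a, b) \<in> Att' - Att. \<not> (a \<in> AR \<and> b \<in> AR))"

end

theory Submission
  imports Defs
begin

lemma reach_refl: "a \<in> AR \<Longrightarrow> reachable AR Att a a"
  unfolding reachable_def by (rule exI[of _ "[a]"]) auto

lemma reach_edge: "a \<in> AR \<Longrightarrow> b \<in> AR \<Longrightarrow> a \<noteq> b \<Longrightarrow> (a,b) \<in> Att \<Longrightarrow> reachable AR Att a b"
  unfolding reachable_def
  apply (rule exI[of _ "[a,b]"])
  by auto

lemma not_reach: "(\<forall>x. (a,x) \<notin> Att) \<Longrightarrow> b \<noteq> a \<Longrightarrow> \<not> reachable AR Att a b"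
  unfolding reachable_def
proof clarify
  fix xs assume h: "\<forall>x. (hd xs,x) \<notin> Att" "last xs \<noteq> hd xs" "xs \<noteq> []"
    "\<forall>i. Suc i < length xs \<longrightarrow> (xs ! i, xs ! Suc i) \<in> Att"
  have "length xs \<noteq> 1" using h(2,3) by (cases xs) auto
  hence "Suc 0 < length xs" using h(3) by (cases xs) auto
  hence "(xs!0, xs!1) \<in> Att" using h(4) by auto
  moreover have "xs!0 = hd xs" using h(3) by (simp add: hd_conv_nth)
  ultimately show False using h(1) by auto
qed

lemma sccs0: "SCCS {0::nat} {} = {{0}}"
  unfolding SCCS_def using reach_refl[of 0 "{0::nat}" "{}"] by auto

lemma sccs_empty: "SCCS {} Att = {}"
  unfolding SCCS_def by auto

lemma sccs12: "SCCS {3::nat,2} {(3,2),(2,3)} = {{3,2}}"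
proof -
  let ?A = "{3::nat,2}" and ?R = "{(3::nat,2),(2,3)}"
  have r: "reachable ?A ?R 3 2" "reachable ?A ?R 2 3" "reachable ?A ?R 3 3" "reachable ?A ?R 2 2"
    by (auto intro: reach_edge reach_refl)
  have "{b\<in>?A. reachable ?A ?R 3 b \<and> reachable ?A ?R b 3} = {3,2}"
       "{b\<in>?A. reachable ?A ?R 2 b \<and> reachable ?A ?R b 2} = {3,2}"
    using r by auto
  thus ?thesis unfolding SCCS_def by auto
qed

abbreviation "Att' \<equiv> {(3::nat,2::nat),(2,3),(3,0)}"

lemma sccs012: "SCCS {0::nat,3,2} Att' = {{0},{3,2}}"
proof -
  let ?A = "{0::nat,3,2}"
  have r: "reachable ?A Att' 3 2" "reachable ?A Att' 2 3" "reachable ?A Att' 3 3"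
     "reachable ?A Att' 2 2" "reachable ?A Att' 0 0"
    by (auto intro: reach_edge reach_refl)
  have n: "\<not> reachable ?A Att' 0 3" "\<not> reachable ?A Att' 0 2"
    by (rule not_reach; auto)+
  have "{b\<in>?A. reachable ?A Att' 0 b \<and> reachable ?A Att' b 0} = {0}"
       "{b\<in>?A. reachable ?A Att' 3 b \<and> reachable ?A Att' b 3} = {3,2}"
       "{b\<in>?A. reachable ?A Att' 2 b \<and> reachable ?A Att' b 2} = {3,2}"
    using r n by auto
  thus ?thesis unfolding SCCS_def by auto
qed

lemma stage_full: "conflict_free AR Att S \<Longrightarrow> Att \<subseteq> AR \<times> AR \<Longrightarrow> S \<union> plus Att S = AR
  \<Longrightarrow> S \<in> stage AR Att"
  unfolding stage_def conflict_free_def plus_def attacks_set_def by blast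

lemma naive0: "naive {0::nat} {} = {{0}}"
  unfolding naive_def conflict_free_def by auto

lemma stage0: "stage {0::nat} {} = {{0}}"
proof -
  have "{0} \<in> stage {0::nat} {}"
    by (rule stage_full) (auto simp: conflict_free_def plus_def attacks_set_def)
  moreover have "S = {0}" if h: "S \<in> stage {0::nat} {}" for S
  proof -
    have cf: "conflict_free {0::nat} {} S" and nx: "\<not> (\<exists>S'. conflict_free {0::nat} {} S' \<and> S' \<union> plus {} S' \<supset> S \<union> plus {} S)"
      using h unfolding stage_def by auto
    have p: "plus {} X = {}" for X :: "nat set" by (simp add: plus_def attacks_set_def)
    have c0: "conflict_free {0::nat} {} {0}" by (simp add: conflict_free_def)
    have "S \<subseteq> {0}" using cf by (simp add: conflict_free_def)
    moreover have "\<not> {0} \<supset> S" using nx c0 unfolding p by blast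
    ultimately show "S = {0}" by blast
  qed
  ultimately show ?thesis by blast
qed

lemma naive_two: assumes "a \<noteq> b" "(a,b) \<in> Att" "(a,a) \<notin> Att"
  shows "{a} \<in> naive {a,b} Att"
  unfolding naive_def
proof (intro CollectI conjI allI impI)
  show "conflict_free {a, b} Att {a}" using assms by (simp add: conflict_free_def)
  fix S' assume h: "conflict_free {a, b} Att S' \<and> {a} \<subseteq> S'"
  then have "S' \<subseteq> {a,b}" "a \<in> S'" "b \<notin> S'" using assms unfolding conflict_free_def by auto
  then show "S' = {a}" by blast
qed

lemma naive12: "{3} \<in> naive {3::nat,2} {(3,2),(2,3)}" "{2} \<in> naive {3::nat,2} {(3,2),(2,3)}"
  using naive_two[of "3::nat" 2 "{(3,2),(2,3)}"] naive_two[of "2::nat" 3 "{(3,2),(2,3)}"] by (simp_all add: insert_commute)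

lemma stage12: "{3} \<in> stage {3::nat,2} {(3,2),(2,3)}" "{2} \<in> stage {3::nat,2} {(3,2),(2,3)}"
  by (rule stage_full; auto simp: conflict_free_def plus_def attacks_set_def)+
lemma rec0: assumes "base {0::nat} {} = {{0}}" "scc_rec base {0} {} E" shows "E = {0}"
  using assms(2)
proof cases
  case base then show ?thesis using assms(1) by simp
next
  case recur then show ?thesis by (simp add: sccs0)
qed

lemma rec_empty: "scc_rec base {} {} {}"
  by (rule scc_rec.recur) (auto simp: sccs_empty)
lemma rec_main:
  assumes b12: "{3} \<in> base {3::nat,2} {(3,2),(2,3)}" "{2} \<in> base {3::nat,2} {(3,2),(2,3)}"
    and b0: "{0} \<in> base {0::nat} {}"
  shows "scc_rec base {0,3,2} Att' {3}" "scc_rec base {0,3,2} Att' {0,2}"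
proof -
  have o12: "out_minus {0,3,2} Att' {3,2} = {}" unfolding out_minus_def by auto
  have o0: "out_minus {0,3,2} Att' {0} = {3}" unfolding out_minus_def by auto
  have up12: "UPset {0,3,2} Att' {3,2} E = {3,2}" for E
    unfolding UPset_def Uset_def Pset_def Dset_def o12 attacks_set_def by auto
  have r12: "restr Att' {3,2} = {(3,2),(2,3)}" unfolding restr_def by auto
  have upa: "UPset {0,3,2} Att' {0} {3} = {}"
    unfolding UPset_def Uset_def Pset_def Dset_def o0 attacks_set_def by auto
  have upb: "UPset {0,3,2} Att' {0} {0,2} = {0}"
    unfolding UPset_def Uset_def Pset_def Dset_def o0 attacks_set_def by auto
  have r0: "restr Att' {0} = {}" "restr Att' {} = {}" unfolding restr_def by auto
  have s12a: "scc_rec base {3,2} {(3,2),(2,3)} {3}"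
    by (rule scc_rec.base) (auto simp: sccs12 b12)
  have s12b: "scc_rec base {3,2} {(3,2),(2,3)} {2}"
    by (rule scc_rec.base) (auto simp: sccs12 b12)
  have s0: "scc_rec base {0} {} {0}"
    by (rule scc_rec.base) (auto simp: sccs0 b0)
  have i: "{0::nat,2} \<inter> {3,2} = {2}" "{0::nat,2} \<inter> {0} = {0}" "{3::nat} \<inter> {3,2} = {3}"
    "{3::nat} \<inter> {0} = {}" by auto
  have a1: "scc_rec base (UPset {0,3,2} Att' {3,2} {3}) (restr Att' (UPset {0,3,2} Att' {3,2} {3})) ({3} \<inter> {3,2})"
    by (simp only: up12 r12 i) (rule s12a)
  have a2: "scc_rec base (UPset {0,3,2} Att' {0} {3}) (restr Att' (UPset {0,3,2} Att' {0} {3})) ({3} \<inter> {0})"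
    by (simp only: upa r0 i) (rule rec_empty)
  have b1: "scc_rec base (UPset {0,3,2} Att' {3,2} {0,2}) (restr Att' (UPset {0,3,2} Att' {3,2} {0,2})) ({0,2} \<inter> {3,2})"
    by (simp only: up12 r12 i) (rule s12b)
  have b2: "scc_rec base (UPset {0,3,2} Att' {0} {0,2}) (restr Att' (UPset {0,3,2} Att' {0} {0,2})) ({0,2} \<inter> {0})"
    by (simp only: upb r0 i) (rule s0)
  have c: "card (SCCS {0::nat,3,2} Att') \<noteq> 1" unfolding sccs012 by simp
  show "scc_rec base {0,3,2} Att' {3}"
  proof (rule scc_rec.recur[OF c])
    show "{3} \<subseteq> {0::nat,3,2}" by auto
    show "\<forall>S\<in>SCCS {0, 3, 2} Att'. scc_rec base (UPset {0, 3, 2} Att' S {3})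
        (restr Att' (UPset {0, 3, 2} Att' S {3})) ({3} \<inter> S)"
      unfolding sccs012 using a1 a2 by blast
  qed
  show "scc_rec base {0,3,2} Att' {0,2}"
  proof (rule scc_rec.recur[OF c])
    show "{0,2} \<subseteq> {0::nat,3,2}" by auto
    show "\<forall>S\<in>SCCS {0, 3, 2} Att'. scc_rec base (UPset {0, 3, 2} Att' S {0,2})
        (restr Att' (UPset {0, 3, 2} Att' S {0,2})) ({0,2} \<inter> S)"
      unfolding sccs012 using b1 b2 by blast
  qed
qed

lemma stageP: "{3} \<in> stage {0::nat,3,2} Att'" "{0,2} \<in> stage {0::nat,3,2} Att'"
  by (rule stage_full; auto simp: conflict_free_def plus_def attacks_set_def)+

lemma ne: "normal_expansion {0::nat} {} {0,3,2} Att'"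
  unfolding normal_expansion_def by auto

lemma afs: "AF {0::nat} {}" "AF {0::nat,3,2} Att'"
  unfolding AF_def by auto

lemma generic:
  assumes "{3} \<in> \<sigma> {0::nat,3,2} Att'" "{0,2} \<in> \<sigma> {0::nat,3,2} Att'"
    "\<And>E. E \<in> \<sigma> {0::nat} {} \<Longrightarrow> E = {0}"
  shows "\<exists>(AR :: nat set) Att AR' Att'.
     AF AR Att \<and> AF AR' Att' \<and> normal_expansion AR Att AR' Att' \<and>
     \<not> (\<forall>E \<in> skeptical \<sigma> AR Att. \<exists>E' \<in> skeptical \<sigma> AR' Att'. (\<not> E' \<subseteq> AR \<or> E' = E))"
proof (rule exI[of _ "{0}"], rule exI[of _ "{}"], rule exI[of _ "{0,3,2}"], rule exI[of _ "Att'"], intro conjI)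
  show "AF {0::nat} {}" "AF {0::nat,3,2} Att'" "normal_expansion {0::nat} {} {0,3,2} Att'"
    using afs ne by auto
  have "\<Inter> (\<sigma> {0::nat,3,2} Att') \<subseteq> {3} \<inter> {0,2}" using assms(1,2) by blast
  also have "{3::nat} \<inter> {0,2} = {}" by simp
  finally have i1: "\<Inter> (\<sigma> {0::nat,3,2} Att') = {}" by blast
  have i2: "0 \<in> \<Inter> (\<sigma> {0::nat} {})" using assms(3) by blast
  show "\<not> (\<forall>E \<in> skeptical \<sigma> {0} {}. \<exists>E' \<in> skeptical \<sigma> {0,3,2} Att'. (\<not> E' \<subseteq> {0} \<or> E' = E))"
  proof -
    have n: "{} \<noteq> \<Inter> (\<sigma> {0::nat} {})" using i2 by blast
    show ?thesis unfolding skeptical_def i1 using n by simp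
  qed
qed

lemma l_stage: "\<exists>(AR :: nat set) Att AR' Att'.
     AF AR Att \<and> AF AR' Att' \<and> normal_expansion AR Att AR' Att' \<and>
     \<not> (\<forall>E \<in> skeptical stage AR Att. \<exists>E' \<in> skeptical stage AR' Att'. (\<not> E' \<subseteq> AR \<or> E' = E))"
proof (rule generic)
  show "{3} \<in> stage {0::nat,3,2} Att'" "{0,2} \<in> stage {0::nat,3,2} Att'" by (fact stageP)+
  show "E = {0}" if "E \<in> stage {0::nat} {}" for E
    using that stage0 by simp
qed

lemma l_stage2: "\<exists>(AR :: nat set) Att AR' Att'.
     AF AR Att \<and> AF AR' Att' \<and> normal_expansion AR Att AR' Att' \<and>
     \<not> (\<forall>E \<in> skeptical stage2 AR Att. \<exists>E' \<in> skeptical stage2 AR' Att'. (\<not> E' \<subseteq> AR \<or> E' = E))"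
proof (rule generic)
  have b0: "{0} \<in> stage {0::nat} {}" using stage0 by simp
  show "{3} \<in> stage2 {0::nat,3,2} Att'" "{0,2} \<in> stage2 {0::nat,3,2} Att'"
    unfolding stage2_def mem_Collect_eq by (fact rec_main[of stage, OF stage12 b0])+
  show "E = {0}" if "E \<in> stage2 {0::nat} {}" for E
    using that unfolding stage2_def mem_Collect_eq by (rule rec0[of stage, OF stage0])
qed

lemma l_cf2: "\<exists>(AR :: nat set) Att AR' Att'.
     AF AR Att \<and> AF AR' Att' \<and> normal_expansion AR Att AR' Att' \<and>
     \<not> (\<forall>E \<in> skeptical cf2 AR Att. \<exists>E' \<in> skeptical cf2 AR' Att'. (\<not> E' \<subseteq> AR \<or> E' = E))"
proof (rule generic)
  have b0: "{0} \<in> naive {0::nat} {}" using naive0 by simp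
  show "{3} \<in> cf2 {0::nat,3,2} Att'" "{0,2} \<in> cf2 {0::nat,3,2} Att'"
    unfolding cf2_def mem_Collect_eq by (fact rec_main[of naive, OF naive12 b0])+
  show "E = {0}" if "E \<in> cf2 {0::nat} {}" for E
    using that unfolding cf2_def mem_Collect_eq by (rule rec0[of naive, OF naive0])
qed

theorem proposition38:
  shows "\<forall>\<sigma> \<in> {stage, stage2, cf2}. \<exists>(AR :: nat set) Att AR' Att'.
     AF AR Att \<and> AF AR' Att' \<and> normal_expansion AR Att AR' Att' \<and>
     \<not> (\<forall>E \<in> skeptical \<sigma> AR Att. \<exists>E' \<in> skeptical \<sigma> AR' Att'. (\<not> E' \<subseteq> AR \<or> E' = E))"
proof (rule ballI)
  fix \<sigma> :: "nat set \<Rightarrow> (nat \<times> nat) set \<Rightarrow> nat set set"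
  assume "\<sigma> \<in> {stage, stage2, cf2}"
  then have "\<sigma> = stage \<or> \<sigma> = stage2 \<or> \<sigma> = cf2" by simp
  then show "\<exists>(AR :: nat set) Att AR' Att'.
     AF AR Att \<and> AF AR' Att' \<and> normal_expansion AR Att AR' Att' \<and>
     \<not> (\<forall>E \<in> skeptical \<sigma> AR Att. \<exists>E' \<in> skeptical \<sigma> AR' Att'. (\<not> E' \<subseteq> AR \<or> E' = E))"
  proof (elim disjE)
    assume "\<sigma> = stage" then show ?thesis using l_stage by (simp only:)
  next
    assume "\<sigma> = stage2" then show ?thesis using l_stage2 by (simp only:)
  next
    assume "\<sigma> = cf2" then show ?thesis using l_cf2 by (simp only:)
  qed
qed

end
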